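(* Let $q\geq 1$, and assume that the following convergence-of-means condition holds: with $$\mu_N=\frac1N\sum_{i=1}^N\lambda_i,\qquad \nu_N=\frac{\sum_{i=1}^N\lambda_i^2}{\sum_{i=1}^N\lambda_i},$$ there exist constants $\mu\in(0,\infty)$, $\nu\in(1,\infty)$ and $\alpha_1>0$ such that $|\mu_N-\mu|=O(N^{-\alpha_1})$ and $|\nu_N-\nu|=O(N^{-\alpha_1})$. Then $$\limsup_{N\to\infty}\sum_{n=0}^{\infty} n^q g^{(N)}_n<\infty \quad\text{if and only if}\quad \limsup_{N\to\infty}\frac1N\sum_{i=1}^N\lambda_i^{q+1}<\infty.$$
   Context: For each $N$, $\{\lambda_i\}_{i=1}^N$ is a sequence of positive reals (the capacities of the nodes $1,\dots,N$ of a random graph on $N$ nodes). Define the probability mass function $$g^{(N)}_n=\frac{1}{N\mu_N}\sum_{i=1}^N e^{-\lambda_i}\frac{\lambda_i^{n+1}}{n!},\qquad n\geq 0,$$ where $\mu_N=\frac1N\sum_{i=1}^N\lambda_i$. *)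

theory Defs
  imports "HOL-Analysis.Analysis" "HOL-Library.Landau_Symbols"
begin

text \<open>lam N i is the capacity of node i (1 \<le> i \<le> N) in the graph on N nodes.\<close>

definition muN :: "(nat \<Rightarrow> nat \<Rightarrow> real) \<Rightarrow> nat \<Rightarrow> real" where
  "muN lam N = (\<Sum>i=1..N. lam N i) / real N"

definition nuN :: "(nat \<Rightarrow> nat \<Rightarrow> real) \<Rightarrow> nat \<Rightarrow> real" where
  "nuN lam N = (\<Sum>i=1..N. (lam N i)^2) / (\<Sum>i=1..N. lam N i)"

definition gN :: "(nat \<Rightarrow> nat \<Rightarrow> real) \<Rightarrow> nat \<Rightarrow> nat \<Rightarrow> real" where
  "gN lam N n = (1 / (real N * muN lam N)) *
     (\<Sum>i=1..N. exp (- lam N i) * (lam N i)^(n+1) / fact n)"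

end

theory Submission
  imports Defs
begin

definition pw :: "real \<Rightarrow> nat \<Rightarrow> real" where
  "pw l n = exp (- l) * l ^ n / fact n"

lemma pw_nonneg: "l \<ge> 0 \<Longrightarrow> pw l n \<ge> 0"
  by (simp add: pw_def)

lemma pw_sums: "pw l sums 1"
proof -
  have "(\<lambda>n. exp (-l) * (l^n /\<^sub>R fact n)) sums (exp (-l) * exp l)"
    by (intro sums_mult exp_converges)
  moreover have "(\<lambda>n. exp (-l) * (l^n /\<^sub>R fact n)) = pw l"
    by (rule ext) (simp add: pw_def divide_inverse mult_ac)
  moreover have "exp (-l) * exp l = 1" by (simp flip: exp_add)
  ultimately show ?thesis by simp
qed

lemma pw_Suc: "real (Suc m) * pw l (Suc m) = l * pw l m"
  unfolding pw_def fact_Suc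
  by (simp add: field_simps del: of_nat_Suc)

lemma sums_shift0: "(\<lambda>m. f (Suc m)) sums s \<Longrightarrow> f 0 = 0 \<Longrightarrow> f sums (s::real)"
  by (simp add: sums_Suc_iff)

lemma pw_mean: "(\<lambda>n. real n * pw l n) sums l"
proof (rule sums_shift0)
  show "(\<lambda>m. real (Suc m) * pw l (Suc m)) sums l"
    unfolding pw_Suc using sums_mult[OF pw_sums, of l] by simp
qed simp

lemma powr_exp_bound:
  assumes "r \<ge> 0"
  shows "(real m + 1) powr r \<le> exp r ^ m"
proof -
  have "(real m + 1) powr r = exp (r * ln (real m + 1))"
    by (simp add: powr_def)
  also have "\<dots> \<le> exp (r * real m)"
    using assms ln_le_minus_one[of "real m + 1"] by (intro exp_mono mult_left_mono) auto
  also have "\<dots> = exp r ^ m" by (simp add: exp_of_nat_mult[symmetric] mult.commute)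
  finally show ?thesis .
qed

lemma summable_powr_pw:
  assumes "r \<ge> 0" "l \<ge> 0"
  shows "summable (\<lambda>m. (real m + 1) powr r * pw l m)"
proof (rule summable_comparison_test')
  have "summable (\<lambda>m. exp (-l) * ((exp r * l)^m /\<^sub>R fact m))"
    by (intro summable_mult summable_exp_generic)
  then show "summable (\<lambda>m. exp (-l) * ((exp r * l)^m /\<^sub>R fact m))" .
  show "norm ((real m + 1) powr r * pw l m) \<le> exp (-l) * ((exp r * l)^m /\<^sub>R fact m)" for m
  proof -
    have "norm ((real m + 1) powr r * pw l m) = (real m + 1) powr r * pw l m"
      using pw_nonneg[OF assms(2)] by simp
    also have "\<dots> \<le> exp r ^ m * pw l m"
      by (intro mult_right_mono powr_exp_bound pw_nonneg assms)
    also have "\<dots> = exp (-l) * ((exp r * l)^m /\<^sub>R fact m)"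
      by (simp add: pw_def power_mult_distrib divide_inverse mult_ac)
    finally show ?thesis .
  qed
qed

lemma summable_powr_pw':
  assumes "r \<ge> 0" "l \<ge> 0" "0 \<le> c" "c \<le> 1"
  shows "summable (\<lambda>m. (real m + c) powr r * pw l m)"
proof (rule summable_comparison_test'[OF summable_powr_pw[OF assms(1,2)]])
  show "norm ((real m + c) powr r * pw l m) \<le> (real m + 1) powr r * pw l m" for m
  proof -
    have "(real m + c) powr r \<le> (real m + 1) powr r"
      using assms by (intro powr_mono2) auto
    moreover have "norm ((real m + c) powr r * pw l m) = (real m + c) powr r * pw l m"
      unfolding real_norm_def
      by (intro abs_of_nonneg mult_nonneg_nonneg powr_ge_zero pw_nonneg assms)
    ultimately show ?thesis
      using pw_nonneg[OF assms(2), of m] by (metis mult_right_mono)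
  qed
qed



lemma tangent_convex:
  fixes q x a :: real
  assumes "q \<ge> 1" "x \<ge> 0" "a > 0"
  shows "a powr q + q * a powr (q-1) * (x - a) \<le> x powr q"
proof (cases "x = 0")
  case True
  have "a powr q = a * a powr (q-1)" using assms by (simp add: powr_mult_base)
  then show ?thesis using True assms
    by (simp add: algebra_simps)
next
  case False
  have d: "((\<lambda>x. x powr q) has_field_derivative q * a powr (q-1)) (at a within {0<..})"
    using assms by (auto intro!: derivative_eq_intros)
  have "x powr q - a powr q \<ge> q * a powr (q-1) * (x - a)"
    by (rule convex_on_imp_above_tangent[OF powr_convex[OF assms(1)] _ _ _ d])
      (use assms False in \<open>simp_all add: connected_Ioi interior_open[OF open_greaterThan]\<close>)
  then show ?thesis by simp
qed

lemma neg_powr_convex: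
  assumes "0 \<le> p" "p \<le> 1" shows "convex_on {0<..} (\<lambda>x::real. - (x powr p))"
proof (rule f''_ge0_imp_convex[where f' = "\<lambda>x. - (p * x powr (p - 1))"
        and f'' = "\<lambda>x. - (p * ((p - 1) * x powr (p - 1 - 1)))"])
  show "convex {0::real<..}" by simp
  fix x :: real assume x: "x \<in> {0<..}"
  then have x0: "x > 0" by simp
  show "((\<lambda>x. - (x powr p)) has_real_derivative - (p * x powr (p - 1))) (at x)"
    using x0 by (auto intro!: derivative_eq_intros)
  show "((\<lambda>x. - (p * x powr (p - 1))) has_real_derivative - (p * ((p - 1) * x powr (p - 1 - 1)))) (at x)"
    using x0 by (auto intro!: derivative_eq_intros)
  have "p * ((1 - p) * x powr (p - 1 - 1)) \<ge> 0"
    using assms x0 by (intro mult_nonneg_nonneg) auto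
  then show "0 \<le> - (p * ((p - 1) * x powr (p - 1 - 1)))" by (simp add: algebra_simps)
qed

lemma tangent_concave:
  fixes r x a :: real
  assumes "0 \<le> r" "r \<le> 1" "x > 0" "a > 0"
  shows "x powr r \<le> a powr r + r * a powr (r-1) * (x - a)"
proof -
  have d: "((\<lambda>x. - (x powr r)) has_field_derivative - (r * a powr (r-1))) (at a within {0<..})"
    using assms by (auto intro!: derivative_eq_intros)
  have "- (x powr r) - (- (a powr r)) \<ge> - (r * a powr (r-1)) * (x - a)"
    by (rule convex_on_imp_above_tangent[OF neg_powr_convex[OF assms(1,2)] _ _ _ d])
      (use assms in \<open>simp_all add: connected_Ioi interior_open[OF open_greaterThan]\<close>)
  then show ?thesis by simp
qed


definition A :: "real \<Rightarrow> real \<Rightarrow> real" where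
  "A r l = (\<Sum>m. (real m + 1) powr r * pw l m)"

lemma A_sums: "r \<ge> 0 \<Longrightarrow> l \<ge> 0 \<Longrightarrow> (\<lambda>m. (real m + 1) powr r * pw l m) sums A r l"
  unfolding A_def by (intro summable_sums summable_powr_pw)

lemma A_nonneg: "r \<ge> 0 \<Longrightarrow> l \<ge> 0 \<Longrightarrow> A r l \<ge> 0"
  unfolding A_def by (intro suminf_nonneg summable_powr_pw mult_nonneg_nonneg powr_ge_zero pw_nonneg) auto

lemma A_base:
  assumes "0 \<le> r" "r \<le> 1" "l > 0"
  shows "A r l \<le> (1 + l) powr r"
proof -
  define a where "a = 1 + l"
  have a: "a > 0" using assms by (simp add: a_def)
  have "(\<lambda>m. a powr r * pw l m + (r * a powr (r-1)) * (real m * pw l m) - (r * a powr (r-1) * l) * pw l m)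
        sums (a powr r * 1 + (r * a powr (r-1)) * l - (r * a powr (r-1) * l) * 1)"
    by (rule sums_diff[OF sums_add[OF sums_mult[OF pw_sums] sums_mult[OF pw_mean]] sums_mult[OF pw_sums]])
  then have s: "(\<lambda>m. a powr r * pw l m + (r * a powr (r-1)) * (real m * pw l m) - (r * a powr (r-1) * l) * pw l m)
        sums (a powr r)" by simp
  show ?thesis unfolding a_def[symmetric]
  proof (rule sums_le[OF _ A_sums[OF assms(1) less_imp_le[OF assms(3)]] s])
    fix m
    have t: "(real m + 1) powr r \<le> a powr r + r * a powr (r-1) * ((real m + 1) - a)"
      using assms a by (intro tangent_concave) auto
    have "(real m + 1) powr r * pw l m \<le> (a powr r + r * a powr (r-1) * ((real m + 1) - a)) * pw l m"
      using pw_nonneg[of l m] assms t by (intro mult_right_mono) auto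
    also have "\<dots> = a powr r * pw l m + (r * a powr (r-1)) * (real m * pw l m) - (r * a powr (r-1) * l) * pw l m"
    proof -
      have e1: "(real m + 1) - a = real m - l" by (simp add: a_def)
      have e2: "(X + c * (x - l)) * p = X * p + c * (x * p) - (c * l) * p" for X c x p :: real
        by (simp add: algebra_simps)
      show ?thesis unfolding e1 by (rule e2)
    qed
    finally show "(real m + 1) powr r * pw l m \<le> a powr r * pw l m + (r * a powr (r-1)) * (real m * pw l m) - (r * a powr (r-1) * l) * pw l m" .
  qed
qed


lemma A_step:
  assumes r: "r \<ge> 1" and l: "l > 0"
  shows "A r l \<le> (2 powr (r-1) * l + 1) * A (r-1) l"
proof -
  have r1: "r - 1 \<ge> 0" using r by simp
  have l0: "l \<ge> 0" using l by simp
  define g where "g m = real m * ((real m + 1) powr (r-1) * pw l m)" for m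
  define h where "h m = (l * 2 powr (r-1)) * ((real m + 1) powr (r-1) * pw l m)" for m
  have sA1: "summable (\<lambda>m. (real m + 1) powr (r-1) * pw l m)"
    by (rule summable_powr_pw[OF r1 l0])
  have sA: "summable (\<lambda>m. (real m + 1) powr r * pw l m)"
    using r l0 by (intro summable_powr_pw) auto
  have split: "(real m + 1) powr r * pw l m = g m + (real m + 1) powr (r-1) * pw l m" for m
  proof -
    have "(real m + 1) powr r = (real m + 1) * (real m + 1) powr (r-1)"
      by (simp add: powr_mult_base)
    then show ?thesis by (simp add: g_def algebra_simps)
  qed
  have gnn: "g m \<ge> 0" for m
    unfolding g_def using pw_nonneg[OF l0, of m] by simp
  have sg: "summable g"
  proof (rule summable_comparison_test'[OF sA])
    show "norm (g m) \<le> (real m + 1) powr r * pw l m" for m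
      using split[of m] gnn[of m] pw_nonneg[OF l0, of m] by simp
  qed
  have gSuc: "g (Suc m) \<le> h m" for m
  proof -
    have "g (Suc m) = (real (Suc m) + 1) powr (r-1) * (real (Suc m) * pw l (Suc m))"
      by (simp add: g_def)
    also have "\<dots> = (real (Suc m) + 1) powr (r-1) * (l * pw l m)"
      by (simp only: pw_Suc)
    also have "\<dots> \<le> (2 powr (r-1) * (real m + 1) powr (r-1)) * (l * pw l m)"
    proof (rule mult_right_mono)
      have "(real (Suc m) + 1) powr (r-1) \<le> (2 * (real m + 1)) powr (r-1)"
        using r1 by (intro powr_mono2) auto
      also have "\<dots> = 2 powr (r-1) * (real m + 1) powr (r-1)"
        by (rule powr_mult)
      finally show "(real (Suc m) + 1) powr (r-1) \<le> 2 powr (r-1) * (real m + 1) powr (r-1)" .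
      show "0 \<le> l * pw l m" using l0 pw_nonneg[OF l0, of m] by simp
    qed
    also have "\<dots> = h m" by (simp add: h_def algebra_simps)
    finally show ?thesis .
  qed
  have sh: "summable h" unfolding h_def by (rule summable_mult[OF sA1])
  have sgS: "summable (\<lambda>m. g (Suc m))" using sg by (simp add: summable_Suc_iff)
  have "A r l = suminf g + A (r-1) l"
    unfolding A_def split by (rule suminf_add[OF sg sA1, symmetric])
  also have "suminf g = (\<Sum>m. g (Suc m))"
    using suminf_split_head[OF sg] by (simp add: g_def)
  also have "(\<Sum>m. g (Suc m)) \<le> suminf h"
    by (rule suminf_le[OF gSuc sgS sh])
  also have "suminf h = (l * 2 powr (r-1)) * A (r-1) l"
    unfolding h_def A_def by (rule suminf_mult[OF sA1])
  finally show ?thesis by (simp add: algebra_simps)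
qed

lemma A_bound_aux:
  "\<forall>r. 0 \<le> r \<and> r \<le> real n + 1 \<longrightarrow> (\<exists>K>0. \<forall>l>0. A r l \<le> K * (1 + l) powr r)"
proof (induction n)
  case 0
  show ?case
  proof (intro allI impI)
    fix r :: real assume "0 \<le> r \<and> r \<le> real 0 + 1"
    then have "\<forall>l>0. A r l \<le> 1 * (1 + l) powr r" using A_base by simp
    then show "\<exists>K>0. \<forall>l>0. A r l \<le> K * (1 + l) powr r" by (intro exI[of _ 1]) simp
  qed
next
  case (Suc n)
  show ?case
  proof (intro allI impI)
    fix r :: real assume rr: "0 \<le> r \<and> r \<le> real (Suc n) + 1"
    show "\<exists>K>0. \<forall>l>0. A r l \<le> K * (1 + l) powr r"
    proof (cases "r \<le> real n + 1")
      case True then show ?thesis using Suc.IH rr by blast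
    next
      case False
      then have r1: "r \<ge> 1" and r1': "0 \<le> r - 1 \<and> r - 1 \<le> real n + 1" using rr by auto
      obtain K where K: "K > 0" "\<forall>l>0. A (r-1) l \<le> K * (1 + l) powr (r-1)"
        using Suc.IH r1' by blast
      have "\<forall>l>0. A r l \<le> (2 powr (r-1) * K) * (1 + l) powr r"
      proof (intro allI impI)
        fix l :: real assume l: "l > 0"
        have c1: "2 powr (r-1) \<ge> (1::real)" using r1 by (simp add: ge_one_powr_ge_zero)
        have An: "A (r-1) l \<ge> 0" using A_nonneg[of "r-1" l] r1 l by simp
        have "A r l \<le> (2 powr (r-1) * l + 1) * A (r-1) l" by (rule A_step[OF r1 l])
        also have "\<dots> \<le> (2 powr (r-1) * (1 + l)) * (K * (1 + l) powr (r-1))"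
        proof (rule mult_mono)
          show "2 powr (r-1) * l + 1 \<le> 2 powr (r-1) * (1 + l)" using c1 by (simp add: algebra_simps)
          show "A (r-1) l \<le> K * (1 + l) powr (r-1)" using K l by blast
          show "0 \<le> 2 powr (r-1) * (1 + l)" using l by simp
        qed (rule An)
        also have "\<dots> = (2 powr (r-1) * K) * ((1 + l) * (1 + l) powr (r-1))" by (simp add: algebra_simps)
        also have "(1 + l) * (1 + l) powr (r-1) = (1 + l) powr r"
          using l by (simp add: powr_mult_base)
        finally show "A r l \<le> (2 powr (r-1) * K) * (1 + l) powr r" .
      qed
      moreover have "2 powr (r-1) * K > 0" using K by simp
      ultimately show ?thesis by blast
    qed
  qed
qed

lemma A_bound: "r \<ge> 0 \<Longrightarrow> \<exists>K>0. \<forall>l>0. A r l \<le> K * (1 + l) powr r"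
  using A_bound_aux[of "nat \<lceil>r\<rceil>"] by (meson of_nat_ceiling le_add_same_cancel1 order_trans zero_le_one)


lemma mom_sums:
  assumes l: "l > 0" and q: "q \<ge> 1"
  shows "(\<lambda>n. real n powr q * pw l n) sums (l * A (q-1) l)"
proof (rule sums_shift0)
  have l0: "l \<ge> 0" using l by simp
  have e: "real (Suc m) powr q * pw l (Suc m) = l * ((real m + 1) powr (q-1) * pw l m)" for m
  proof -
    have "real (Suc m) powr q = real (Suc m) * real (Suc m) powr (q-1)"
      by (simp add: powr_mult_base del: of_nat_Suc)
    then have "real (Suc m) powr q * pw l (Suc m) = real (Suc m) powr (q-1) * (real (Suc m) * pw l (Suc m))"
      by (simp add: algebra_simps del: of_nat_Suc)
    also have "\<dots> = real (Suc m) powr (q-1) * (l * pw l m)" by (simp only: pw_Suc)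
    finally show ?thesis by (simp add: algebra_simps)
  qed
  show "(\<lambda>m. real (Suc m) powr q * pw l (Suc m)) sums (l * A (q-1) l)"
    unfolding e using q by (intro sums_mult A_sums l0) simp
qed simp

lemma mom_lower:
  assumes l: "l > 0" and q: "q \<ge> 1"
  shows "l powr q \<le> l * A (q-1) l"
proof -
  have "(\<lambda>n. l powr q * pw l n + (q * l powr (q-1)) * (real n * pw l n) - (q * l powr (q-1) * l) * pw l n)
        sums (l powr q * 1 + (q * l powr (q-1)) * l - (q * l powr (q-1) * l) * 1)"
    by (rule sums_diff[OF sums_add[OF sums_mult[OF pw_sums] sums_mult[OF pw_mean]] sums_mult[OF pw_sums]])
  then have s: "(\<lambda>n. l powr q * pw l n + (q * l powr (q-1)) * (real n * pw l n) - (q * l powr (q-1) * l) * pw l n)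
        sums (l powr q)" by simp
  show ?thesis
  proof (rule sums_le[OF _ s mom_sums[OF l q]])
    fix n
    have t: "l powr q + q * l powr (q-1) * (real n - l) \<le> real n powr q"
      using q l by (intro tangent_convex) auto
    have e2: "(X + c * (x - l)) * p = X * p + c * (x * p) - (c * l) * p" for X c x p :: real
      by (simp add: algebra_simps)
    have "l powr q * pw l n + (q * l powr (q-1)) * (real n * pw l n) - (q * l powr (q-1) * l) * pw l n
        = (l powr q + q * l powr (q-1) * (real n - l)) * pw l n" by (rule e2[symmetric])
    also have "\<dots> \<le> real n powr q * pw l n"
      using t pw_nonneg[of l n] l by (intro mult_right_mono) auto
    finally show "l powr q * pw l n + (q * l powr (q-1)) * (real n * pw l n) - (q * l powr (q-1) * l) * pw l n
        \<le> real n powr q * pw l n" .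
  qed
qed

lemma P_props:
  assumes q: "q \<ge> 1"
  shows "\<exists>K>0. \<forall>l>0. \<exists>P. (\<lambda>n. real n powr q * (exp (- l) * l ^ (n+1) / fact n)) sums P
            \<and> l powr (q+1) \<le> P \<and> P \<le> K * (l^2 + l powr (q+1))"
proof -
  obtain K0 where K0: "K0 > 0" "\<forall>l>0. A (q-1) l \<le> K0 * (1 + l) powr (q-1)"
    using A_bound[of "q-1"] q by auto
  have c1: "2 powr (q-1) \<ge> (1::real)" using q by (simp add: ge_one_powr_ge_zero)
  have "\<forall>l>0. \<exists>P. (\<lambda>n. real n powr q * (exp (- l) * l ^ (n+1) / fact n)) sums P
            \<and> l powr (q+1) \<le> P \<and> P \<le> (K0 * 2 powr (q-1)) * (l^2 + l powr (q+1))"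
  proof (intro allI impI)
    fix l :: real assume l: "l > 0"
    have eqt: "real n powr q * (exp (- l) * l ^ (n+1) / fact n) = l * (real n powr q * pw l n)" for n
      by (simp add: pw_def algebra_simps)
    have sP: "(\<lambda>n. real n powr q * (exp (- l) * l ^ (n+1) / fact n)) sums (l * (l * A (q-1) l))"
      unfolding eqt by (rule sums_mult[OF mom_sums[OF l q]])
    have low: "l powr (q+1) \<le> l * (l * A (q-1) l)"
    proof -
      have "l powr (q+1) = l * l powr q" using l by (simp add: powr_add)
      also have "\<dots> \<le> l * (l * A (q-1) l)" using mom_lower[OF l q] l by (intro mult_left_mono) auto
      finally show ?thesis .
    qed
    have b1: "(1 + l) powr (q-1) \<le> 2 powr (q-1) * (1 + l powr (q-1))"
    proof (cases "l \<le> 1")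
      case True
      have "(1 + l) powr (q-1) \<le> 2 powr (q-1)" using True l q by (intro powr_mono2) auto
      also have "\<dots> \<le> 2 powr (q-1) * (1 + l powr (q-1))" by simp
      finally show ?thesis .
    next
      case False
      have "(1 + l) powr (q-1) \<le> (2 * l) powr (q-1)" using False l q by (intro powr_mono2) auto
      also have "\<dots> = 2 powr (q-1) * l powr (q-1)" using l by (simp add: powr_mult)
      also have "\<dots> \<le> 2 powr (q-1) * (1 + l powr (q-1))" by simp
      finally show ?thesis .
    qed
    have "l * (l * A (q-1) l) = l^2 * A (q-1) l" by (simp add: power2_eq_square)
    also have "\<dots> \<le> l^2 * (K0 * (2 powr (q-1) * (1 + l powr (q-1))))"
    proof (rule mult_left_mono)
      have "A (q-1) l \<le> K0 * (1 + l) powr (q-1)" using K0 l by blast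
      also have "\<dots> \<le> K0 * (2 powr (q-1) * (1 + l powr (q-1)))"
        using b1 K0 by (intro mult_left_mono) auto
      finally show "A (q-1) l \<le> K0 * (2 powr (q-1) * (1 + l powr (q-1)))" .
    qed simp
    also have "\<dots> = (K0 * 2 powr (q-1)) * (l^2 + l^2 * l powr (q-1))" by (simp add: algebra_simps)
    also have "l^2 * l powr (q-1) = l powr (q+1)"
    proof -
      have "l^2 = l powr 2" using l by (simp add: powr_numeral)
      moreover have "l powr 2 * l powr (q-1) = l powr (2 + (q-1))" by (rule powr_add[symmetric])
      moreover have "2 + (q - 1) = q + 1" by simp
      ultimately show ?thesis by metis
    qed
    finally show "\<exists>P. (\<lambda>n. real n powr q * (exp (- l) * l ^ (n+1) / fact n)) sums P
            \<and> l powr (q+1) \<le> P \<and> P \<le> (K0 * 2 powr (q-1)) * (l^2 + l powr (q+1))"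
      using sP low by blast
  qed
  moreover have "K0 * 2 powr (q-1) > 0" using K0 by simp
  ultimately show ?thesis by blast
qed


lemma limsup_fin:
  fixes f :: "nat \<Rightarrow> ennreal"
  shows "limsup f < \<infinity> \<longleftrightarrow> (\<exists>B\<ge>0. eventually (\<lambda>N. f N \<le> ennreal B) sequentially)"
proof
  assume "limsup f < \<infinity>"
  then obtain b where b: "limsup f = ennreal b" "b \<ge> 0"
    by (cases "limsup f") auto
  have "limsup f < ennreal (b + 1)" using b by (simp add: ennreal_less_iff)
  then have "eventually (\<lambda>N. f N < ennreal (b + 1)) sequentially" by (rule Limsup_lessD)
  then have "eventually (\<lambda>N. f N \<le> ennreal (b + 1)) sequentially"
    by (rule eventually_mono) simp
  then show "\<exists>B\<ge>0. eventually (\<lambda>N. f N \<le> ennreal B) sequentially" using b(2)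
    by (intro exI[of _ "b+1"]) simp
next
  assume "\<exists>B\<ge>0. eventually (\<lambda>N. f N \<le> ennreal B) sequentially"
  then obtain B where "eventually (\<lambda>N. f N \<le> ennreal B) sequentially" by blast
  then have "limsup f \<le> ennreal B" by (rule Limsup_bounded)
  then show "limsup f < \<infinity>" using le_less_trans by fastforce
qed

lemma bigo_to_tendsto:
  fixes f :: "nat \<Rightarrow> real" and \<alpha> :: real
  assumes "(\<lambda>N. \<bar>f N - m\<bar>) \<in> O(\<lambda>N. real N powr (-\<alpha>))" "\<alpha> > 0"
  shows "f \<longlonglongrightarrow> m"
proof -
  obtain c where c: "c > 0" "eventually (\<lambda>N. norm (\<bar>f N - m\<bar>) \<le> c * norm (real N powr (-\<alpha>))) sequentially"
    using assms(1) by (elim landau_o.bigE)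
  have t0: "(\<lambda>N. real N powr (-\<alpha>)) \<longlonglongrightarrow> 0"
    using assms(2) by (intro tendsto_neg_powr filterlim_real_sequentially) simp
  have "(\<lambda>N. c * norm (real N powr (-\<alpha>))) \<longlonglongrightarrow> 0"
    by (intro tendsto_mult_right_zero tendsto_norm_zero t0)
  then have "(\<lambda>N. \<bar>f N - m\<bar>) \<longlonglongrightarrow> 0"
    by (rule Lim_null_comparison[OF c(2)])
  then have "(\<lambda>N. f N - m) \<longlonglongrightarrow> 0" by (simp add: tendsto_rabs_zero_iff)
  then show ?thesis by (simp add: LIM_zero_iff)
qed


theorem lemmaA2:
  fixes lam :: "nat \<Rightarrow> nat \<Rightarrow> real" and q mu nu \<alpha>1 :: real
  assumes pos: "\<And>N i. 1 \<le> i \<Longrightarrow> i \<le> N \<Longrightarrow> lam N i > 0"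
    and q: "q \<ge> 1"
    and mu: "0 < mu" and nu: "1 < nu" and alpha: "\<alpha>1 > 0"
    and conv_mu: "(\<lambda>N. \<bar>muN lam N - mu\<bar>) \<in> O(\<lambda>N. real N powr (-\<alpha>1))"
    and conv_nu: "(\<lambda>N. \<bar>nuN lam N - nu\<bar>) \<in> O(\<lambda>N. real N powr (-\<alpha>1))"
  shows "limsup (\<lambda>N. \<Sum>n. ennreal (real n powr q * gN lam N n)) < \<infinity>
     \<longleftrightarrow> limsup (\<lambda>N. ennreal ((\<Sum>i=1..N. lam N i powr (q+1)) / real N)) < \<infinity>"
proof -
  obtain K where K: "K > 0" "\<forall>l>0. \<exists>P. (\<lambda>n. real n powr q * (exp (- l) * l ^ (n+1) / fact n)) sums P
            \<and> l powr (q+1) \<le> P \<and> P \<le> K * (l^2 + l powr (q+1))"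
    using P_props[OF q] by blast
  define t where "t N i n = real n powr q * (exp (- lam N i) * lam N i ^ (n+1) / fact n)" for N i n
  define Pf where "Pf N i = suminf (t N i)" for N i
  have hP: "t N i sums Pf N i \<and> lam N i powr (q+1) \<le> Pf N i \<and> Pf N i \<le> K * ((lam N i)^2 + lam N i powr (q+1))"
    if iN: "1 \<le> i" "i \<le> N" for N i
  proof -
    obtain P where P: "t N i sums P" "lam N i powr (q+1) \<le> P" "P \<le> K * ((lam N i)^2 + lam N i powr (q+1))"
      using K(2) pos[OF iN] unfolding t_def by blast
    have "Pf N i = P" unfolding Pf_def using P(1) by (rule sums_unique[symmetric])
    then show ?thesis using P by simp
  qed
  define s where "s N = (\<Sum>i=1..N. lam N i)" for N
  define S where "S N = (\<Sum>i=1..N. Pf N i) / s N" for N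
  define T where "T N = (\<Sum>i=1..N. lam N i powr (q+1)) / real N" for N
  have s_pos: "s N > 0" if "N \<ge> 1" for N
    unfolding s_def using that pos by (intro sum_pos) auto
  have Ns: "real N * muN lam N = s N" if "N \<ge> 1" for N
    using that by (simp add: muN_def s_def)
  have mu_eq: "muN lam N = s N / real N" for N by (simp add: muN_def s_def)
  have nu_eq: "nuN lam N = (\<Sum>i=1..N. (lam N i)^2) / s N" for N by (simp add: nuN_def s_def)
  have T_nn: "T N \<ge> 0" for N unfolding T_def by (intro divide_nonneg_nonneg sum_nonneg) auto
  have ennS: "(\<Sum>n. ennreal (real n powr q * gN lam N n)) = ennreal (S N)" if N: "N \<ge> 1" for N
  proof (rule suminf_ennreal_eq)
    have eq: "real n powr q * gN lam N n = (1 / s N) * (\<Sum>i=1..N. t N i n)" for n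
      unfolding gN_def t_def Ns[OF N] by (simp add: sum_distrib_left mult.left_commute)
    have "(\<lambda>n. (1 / s N) * (\<Sum>i=1..N. t N i n)) sums ((1 / s N) * (\<Sum>i=1..N. Pf N i))"
      by (intro sums_mult sums_sum) (use hP in auto)
    then show "(\<lambda>n. real n powr q * gN lam N n) sums S N"
      unfolding eq S_def by simp
    show "0 \<le> real n powr q * gN lam N n" for n
      unfolding eq t_def using s_pos[OF N] pos
      by (intro mult_nonneg_nonneg sum_nonneg divide_nonneg_nonneg) (auto intro: less_imp_le)
  qed
  have I1: "T N \<le> muN lam N * S N" if N: "N \<ge> 1" for N
  proof -
    have "(\<Sum>i=1..N. lam N i powr (q+1)) \<le> (\<Sum>i=1..N. Pf N i)"
      by (intro sum_mono) (use hP in auto)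
    moreover have "muN lam N * S N = (\<Sum>i=1..N. Pf N i) / real N"
      unfolding mu_eq S_def using s_pos[OF N] by simp
    ultimately show ?thesis unfolding T_def by (simp add: divide_right_mono)
  qed
  have I2: "S N \<le> K * (nuN lam N + T N / muN lam N)" if N: "N \<ge> 1" for N
  proof -
    have "(\<Sum>i=1..N. Pf N i) \<le> (\<Sum>i=1..N. K * ((lam N i)^2 + lam N i powr (q+1)))"
      by (intro sum_mono) (use hP in auto)
    also have "\<dots> = K * ((\<Sum>i=1..N. (lam N i)^2) + (\<Sum>i=1..N. lam N i powr (q+1)))"
      by (simp only: sum.distrib[symmetric] sum_distrib_left)
    finally have a: "(\<Sum>i=1..N. Pf N i) / s N \<le> K * ((\<Sum>i=1..N. (lam N i)^2) + (\<Sum>i=1..N. lam N i powr (q+1))) / s N"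
      using s_pos[OF N] by (simp add: divide_right_mono)
    have b: "T N / muN lam N = (\<Sum>i=1..N. lam N i powr (q+1)) / s N"
      unfolding T_def mu_eq using s_pos[OF N] N by simp
    have c: "K * (X + Y) / s N = K * (X / s N + Y / s N)" for X Y :: real
      by (metis add_divide_distrib times_divide_eq_right)
    show ?thesis unfolding S_def nu_eq b using a unfolding c .
  qed
  have muT: "muN lam \<longlonglongrightarrow> mu" by (rule bigo_to_tendsto[OF conv_mu alpha])
  have nuT: "nuN lam \<longlonglongrightarrow> nu" by (rule bigo_to_tendsto[OF conv_nu alpha])
  have ev: "eventually (\<lambda>N. N \<ge> 1 \<and> mu / 2 < muN lam N \<and> muN lam N < 2 * mu \<and> nuN lam N < nu + 1) sequentially"
    by (intro eventually_conj eventually_ge_at_top order_tendstoD(1)[OF muT] order_tendstoD(2)[OF muT]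
        order_tendstoD(2)[OF nuT]) (use mu in auto)
  show ?thesis
    unfolding limsup_fin
  proof
    assume "\<exists>B\<ge>0. eventually (\<lambda>N. (\<Sum>n. ennreal (real n powr q * gN lam N n)) \<le> ennreal B) sequentially"
    then obtain B where B: "B \<ge> 0" "eventually (\<lambda>N. (\<Sum>n. ennreal (real n powr q * gN lam N n)) \<le> ennreal B) sequentially"
      by blast
    have "eventually (\<lambda>N. ennreal (T N) \<le> ennreal (2 * mu * B)) sequentially"
      using B(2) ev
    proof eventually_elim
      case (elim N)
      then have N: "N \<ge> 1" by simp
      have "S N \<le> B" using elim(1) B(1) unfolding ennS[OF N] by (simp add: ennreal_le_iff)
      have Snn: "S N \<ge> 0" unfolding S_def using hP pos s_pos[OF N]
        by (intro divide_nonneg_nonneg sum_nonneg) (auto intro: order_trans[OF powr_ge_zero])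
      have "T N \<le> muN lam N * S N" by (rule I1[OF N])
      also have "\<dots> \<le> (2 * mu) * B"
        using elim(2) \<open>S N \<le> B\<close> Snn mu by (intro mult_mono) auto
      finally show ?case by (intro ennreal_leI) simp
    qed
    then show "\<exists>B\<ge>0. eventually (\<lambda>N. ennreal ((\<Sum>i=1..N. lam N i powr (q+1)) / real N) \<le> ennreal B) sequentially"
      using B(1) mu unfolding T_def by (intro exI[of _ "2 * mu * B"]) auto
  next
    assume "\<exists>B\<ge>0. eventually (\<lambda>N. ennreal ((\<Sum>i=1..N. lam N i powr (q+1)) / real N) \<le> ennreal B) sequentially"
    then obtain B where B: "B \<ge> 0" "eventually (\<lambda>N. ennreal (T N) \<le> ennreal B) sequentially"
      unfolding T_def by blast
    define C where "C = K * (nu + 1 + B / (mu / 2))"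
    have "eventually (\<lambda>N. (\<Sum>n. ennreal (real n powr q * gN lam N n)) \<le> ennreal C) sequentially"
      using B(2) ev
    proof eventually_elim
      case (elim N)
      then have N: "N \<ge> 1" by simp
      have TB: "T N \<le> B" using elim(1) B(1) by (simp add: ennreal_le_iff)
      have "T N / muN lam N \<le> B / (mu / 2)"
        using elim(2) TB T_nn[of N] mu B(1) by (intro frac_le) auto
      then have "S N \<le> C"
        using I2[OF N] elim(2) K(1) unfolding C_def
        by (smt (verit) mult_left_mono)
      then show ?case unfolding ennS[OF N] by (intro ennreal_leI)
    qed
    moreover have "C \<ge> 0" unfolding C_def using K(1) nu mu B(1) by simp
    ultimately show "\<exists>B\<ge>0. eventually (\<lambda>N. (\<Sum>n. ennreal (real n powr q * gN lam N n)) \<le> ennreal B) sequentially"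
      by blast
  qed
qed

end
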